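(* Let $n$ be an odd positive integer, $n_1=\lceil n/2\rceil$, $n_0=\lfloor n/2\rfloor$. Suppose $k\in K_0(\mathfrak{p})$ and $g\in\{1,\begin{pmatrix}0&1\\\varpi&0\end{pmatrix}\}$. Then $k g w a(\varpi^{n_1})=k'a(\varpi^{n_1})g'z$ for some $k'\in K$ with $l(k'a(\varpi^{n_1}))\le n_0$, some $g'\in\{1,\begin{pmatrix}0&1\\\varpi^n&0\end{pmatrix}\}$, and some $z\in Z$.
   Context: $F$ is a non-archimedean local field of characteristic $0$ with ring of integers $\mathfrak{o}$, maximal ideal $\mathfrak{p}$, uniformizer $\varpi$; $U_j=\{x\in\mathfrak{o}^\times: v(x-1)\ge j\}$. $G=\mathrm{GL}_2(F)$, $K=\mathrm{GL}_2(\mathfrak{o})$, $K_0(\mathfrak{p})=K\cap\begin{pmatrix}\mathfrak{o}&\mathfrak{o}\\\mathfrak{p}&\mathfrak{o}\end{pmatrix}$, $K_1(\mathfrak{p}^n)=K\cap\begin{pmatrix}1+\mathfrak{p}^n&\mathfrak{o}\\\mathfrak{p}^n&\mathfrak{o}\end{pmatrix}$, $w=\begin{pmatrix}0&1\\-1&0\end{pmatrix}$, $a(y)=\mathrm{diag}(y,1)$, $n(x)=\begin{pmatrix}1&x\\0&1\end{pmatrix}$, $Z$ the center, $N=\{n(x)\}$. There is a disjoint decomposition $G=\bigsqcup_{t\in\mathbb{Z}}\bigsqcup_{0\le l\le n}\bigsqcup_{v\in\mathfrak{o}^\times/U_{\min(l,n-l)}}ZN a(\varpi^t)wn(\varpi^{-l}v)K_1(\mathfrak{p}^n)$;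 for $h\in G$, $l(h)$ denotes the unique integer $0\le l\le n$ with $h\in ZNa(\varpi^{t})wn(\varpi^{-l}v)K_1(\mathfrak{p}^n)$ for some $t\in\mathbb Z$, $v\in\mathfrak{o}^\times$. *)

theory Defs
  imports "HOL-Analysis.Analysis"
begin

text \<open>A field of characteristic 0 (type class field_char_0) carrying a normalized
discrete valuation v (values on nonzero elements; v 0 is irrelevant), complete
for the valuation topology, with finite residue field.\<close>

definition in_pow :: "('a::field \<Rightarrow> int) \<Rightarrow> int \<Rightarrow> 'a \<Rightarrow> bool" where
  "in_pow v j x \<longleftrightarrow> x = 0 \<or> v x \<ge> j"

definition nonarch_local_field :: "('a::field_char_0 \<Rightarrow> int) \<Rightarrow> bool" where
  "nonarch_local_field v \<longleftrightarrow>
     (\<forall>x y. x \<noteq> 0 \<longrightarrow> y \<noteq> 0 \<longrightarrow> v (x * y) = v x + v y) \<and>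
     (\<forall>x y. x \<noteq> 0 \<longrightarrow> y \<noteq> 0 \<longrightarrow> x + y \<noteq> 0 \<longrightarrow> v (x + y) \<ge> min (v x) (v y)) \<and>
     (\<exists>u. u \<noteq> 0 \<and> v u = 1) \<and>
     (\<exists>S. finite S \<and> (\<forall>s\<in>S. in_pow v 0 s) \<and>
          (\<forall>x. in_pow v 0 x \<longrightarrow> (\<exists>s\<in>S. in_pow v 1 (x - s)))) \<and>
     (\<forall>f::nat \<Rightarrow> 'a. (\<forall>N. \<exists>M. \<forall>i\<ge>M. \<forall>j\<ge>M. in_pow v N (f i - f j)) \<longrightarrow>
          (\<exists>L. \<forall>N. \<exists>M. \<forall>i\<ge>M. in_pow v N (f i - L)))"

definition is_unit_v :: "('a::field \<Rightarrow> int) \<Rightarrow> 'a \<Rightarrow> bool" where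
  "is_unit_v v x \<longleftrightarrow> x \<noteq> 0 \<and> v x = 0"

definition mat2 :: "'a::zero \<Rightarrow> 'a \<Rightarrow> 'a \<Rightarrow> 'a \<Rightarrow> 'a^2^2" where
  "mat2 a b c d = (\<chi> i j. if i = 1 then (if j = 1 then a else b) else (if j = 1 then c else d))"

definition GL2 :: "(('a::field)^2^2) set" where
  "GL2 = {A. det A \<noteq> 0}"

definition wmat :: "('a::comm_ring_1)^2^2" where
  "wmat = mat2 0 1 (-1) 0"

definition amat :: "'a::comm_ring_1 \<Rightarrow> 'a^2^2" where
  "amat y = mat2 y 0 0 1"

definition nmat :: "'a::comm_ring_1 \<Rightarrow> 'a^2^2" where
  "nmat x = mat2 1 x 0 1"

definition center :: "(('a::field)^2^2) set" where
  "center = {mat c | c. c \<noteq> 0}"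

definition Kmax :: "('a::field \<Rightarrow> int) \<Rightarrow> ('a^2^2) set" where
  "Kmax v = {mat2 a b c d | a b c d. in_pow v 0 a \<and> in_pow v 0 b \<and> in_pow v 0 c
                \<and> in_pow v 0 d \<and> is_unit_v v (a * d - b * c)}"

definition K0p :: "('a::field \<Rightarrow> int) \<Rightarrow> ('a^2^2) set" where
  "K0p v = {mat2 a b c d | a b c d. mat2 a b c d \<in> Kmax v \<and> in_pow v 1 c}"

definition K1 :: "('a::field \<Rightarrow> int) \<Rightarrow> nat \<Rightarrow> ('a^2^2) set" where
  "K1 v n = {mat2 a b c d | a b c d. mat2 a b c d \<in> Kmax v
                \<and> in_pow v (int n) (a - 1) \<and> in_pow v (int n) c}"

definition lvl :: "('a::field \<Rightarrow> int) \<Rightarrow> 'a \<Rightarrow> nat \<Rightarrow> 'a^2^2 \<Rightarrow> nat" where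
  "lvl v \<pi> n h = (THE l. l \<le> n \<and>
      (\<exists>z x t u k. z \<in> center \<and> is_unit_v v u \<and> k \<in> K1 v n \<and>
         h = z ** nmat x ** amat (\<pi> powi t) ** wmat ** nmat (\<pi> powi (- int l) * u) ** k))"

end

theory Submission
  imports Defs
begin

lemma mat2_eq_iff: "(mat2 a b c d :: 'a::zero^2^2) = mat2 a' b' c' d' \<longleftrightarrow> a = a' \<and> b = b' \<and> c = c' \<and> d = d'"
  by (auto simp: mat2_def vec_eq_iff forall_2)

lemma mat2_mult: "(mat2 a b c d :: 'a::comm_ring_1^2^2) ** mat2 a' b' c' d' = mat2 (a*a'+b*c') (a*b'+b*d') (c*a'+d*c') (c*b'+d*d')"
  by (simp add: mat2_def matrix_matrix_mult_def vec_eq_iff forall_2 sum_2)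

lemma mat_mat2: "(mat x :: 'a::comm_ring_1^2^2) = mat2 x 0 0 x"
  by (simp add: mat2_def mat_def vec_eq_iff forall_2)

lemma det_mat2: "det (mat2 a b c d :: 'a::comm_ring_1^2^2) = a*d - b*c"
  by (simp add: det_2 mat2_def)

lemma decomp_bottom:
  "(mat c0 ** nmat x ** amat p ** wmat ** nmat y ** mat2 A B C D :: 'a::comm_ring_1^2^2)$2$1 = -c0*(A+y*C) \<and>
   (mat c0 ** nmat x ** amat p ** wmat ** nmat y ** mat2 A B C D :: 'a::comm_ring_1^2^2)$2$2 = -c0*(B+y*D)"
  by (simp add: mat_mat2 nmat_def amat_def wmat_def mat2_mult) (simp add: mat2_def algebra_simps)

lemma decomp_exists:
  fixes P Q R S :: "'a::field"
  assumes "R \<noteq> 0" "B + y*D = S/R" "p*D = (P*S - Q*R)/R^2"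
  shows "mat2 P Q R S = mat (-R) ** nmat (P/R) ** amat p ** wmat ** nmat y ** mat2 1 B 0 D"
proof -
  have e: "p*D*R = (P*S - Q*R)/R" using assms(1,3) by (simp add: field_simps power2_eq_square)
  have S: "S = R*(B+y*D)" using assms(1,2) by (simp add: field_simps)
  have e1: "p*D*R*R = P*S - Q*R" using e assms(1) by (simp add: field_simps)
  have "R*(p*D*R) = R*(P*(B+y*D) - Q)" using e1 unfolding S by (simp add: algebra_simps)
  then have e3: "p*D*R = P*(B+y*D) - Q" using assms(1) by simp
  show ?thesis
    apply (simp add: mat_mat2 nmat_def amat_def wmat_def mat2_mult mat2_eq_iff)
    using assms(1) e3 S by (auto simp: field_simps)
qed

locale valf =
  fixes v :: "'a::field_char_0 \<Rightarrow> int" and \<pi> :: 'a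
  assumes nl: "nonarch_local_field v" and pi0: "\<pi> \<noteq> 0" and vpi: "v \<pi> = 1"
begin

lemma vmult: "x \<noteq> 0 \<Longrightarrow> y \<noteq> 0 \<Longrightarrow> v (x*y) = v x + v y"
  using nl unfolding nonarch_local_field_def by blast

lemma vadd: "x \<noteq> 0 \<Longrightarrow> y \<noteq> 0 \<Longrightarrow> x + y \<noteq> 0 \<Longrightarrow> v (x + y) \<ge> min (v x) (v y)"
  using nl unfolding nonarch_local_field_def by blast

lemma v1: "v 1 = 0"
  using vmult[of 1 1] by simp

lemma vm1: "v (-1) = 0"
  using vmult[of "-1" "-1"] v1 by simp

lemma vneg: "x \<noteq> 0 \<Longrightarrow> v (-x) = v x"
  using vmult[of "-1" x] vm1 by simp

lemma vinv: "x \<noteq> 0 \<Longrightarrow> v (inverse x) = - v x"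
  using vmult[of x "inverse x"] v1 by simp

lemma vdiv: "x \<noteq> 0 \<Longrightarrow> y \<noteq> 0 \<Longrightarrow> v (x / y) = v x - v y"
  using vmult[of x "inverse y"] vinv[of y] by (simp add: divide_inverse)

lemma vpow: "v (\<pi> ^ k) = int k"
  by (induction k) (simp_all add: v1 vmult pi0 vpi)

lemma vpowi: "v (\<pi> powi k) = k"
proof (cases "k \<ge> 0")
  case True then show ?thesis using vpow[of "nat k"] by (simp add: power_int_def)
next
  case False then show ?thesis using vpow[of "nat (-k)"] vinv[of "\<pi> ^ nat (-k)"] pi0
    by (simp add: power_int_def power_inverse)
qed

lemma vstrict:
  assumes "x \<noteq> 0" "y = 0 \<or> v y > v x"
  shows "x + y \<noteq> 0 \<and> v (x + y) = v x"
proof (cases "y = 0")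
  case True then show ?thesis using assms by simp
next
  case False
  with assms have lt: "v y > v x" by simp
  have ne: "x + y \<noteq> 0"
  proof
    assume "x + y = 0" then have "y = -x" by (simp add: eq_neg_iff_add_eq_0 add.commute)
    then show False using lt vneg[of x] assms by simp
  qed
  have ge: "v (x+y) \<ge> v x" using vadd[OF assms(1) False ne] lt by simp
  have "v x \<ge> min (v (x+y)) (v (-y))" using vadd[of "x+y" "-y"] ne False assms(1) by simp
  then have "v (x+y) \<le> v x" using vneg[OF False] lt by linarith
  with ge ne show ?thesis by simp
qed

lemma inpow_add: "in_pow v j x \<Longrightarrow> in_pow v j y \<Longrightarrow> in_pow v j (x + y)"
  unfolding in_pow_def using vadd[of x y] by (cases "x = 0"; cases "y = 0"; cases "x + y = 0") auto

lemma inpow_mult: "in_pow v i x \<Longrightarrow> in_pow v j y \<Longrightarrow> in_pow v (i + j) (x * y)"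
  unfolding in_pow_def using vmult[of x y] by (cases "x = 0"; cases "y = 0") auto

lemma inpow_neg: "in_pow v j x \<Longrightarrow> in_pow v j (-x)"
  unfolding in_pow_def using vneg[of x] by (cases "x = 0") auto

lemma inpow_mono: "in_pow v j x \<Longrightarrow> i \<le> j \<Longrightarrow> in_pow v i x"
  unfolding in_pow_def by auto


lemma K1_elim:
  assumes "mat2 A B C D \<in> K1 v n"
  shows "in_pow v 0 A \<and> in_pow v 0 B \<and> in_pow v 0 C \<and> in_pow v 0 D \<and> is_unit_v v (A*D - B*C)
         \<and> in_pow v (int n) (A - 1) \<and> in_pow v (int n) C"
  using assms unfolding K1_def Kmax_def by (auto simp: mat2_eq_iff)

lemma vunit_prod: "is_unit_v v x \<Longrightarrow> y \<noteq> 0 \<Longrightarrow> v (x * y) = v y"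
  unfolding is_unit_v_def using vmult by simp

lemma bottom_inv:
  assumes n1: "n \<ge> 1" and ln: "l \<le> n" and uu: "is_unit_v v u" and k1: "mat2 A B C D \<in> K1 v n"
    and c0: "c0 \<noteq> 0" and R0: "R \<noteq> 0" and Rd: "R = -c0*(A+y*C)" and Sd: "S = -c0*(B+y*D)"
    and yd: "y = \<pi> powi (-int l) * u"
  shows "(l = 0 \<longrightarrow> S = 0 \<or> v S \<ge> v R) \<and>
         (l \<ge> 1 \<longrightarrow> S \<noteq> 0 \<and> v R - v S \<ge> int l \<and> (l < n \<longrightarrow> v R - v S = int l))"
proof -
  note K = K1_elim[OF k1]
  have u0: "u \<noteq> 0" "v u = 0" using uu by (auto simp: is_unit_v_def)
  have y0: "y \<noteq> 0" using u0 pi0 yd by simp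
  have vy: "v y = - int l" using yd vmult[of "\<pi> powi (-int l)" u] u0 pi0 vpowi by simp
  have A1: "A = 1 + (A - 1)" by simp
  have "1 + (A - 1) \<noteq> 0 \<and> v (1 + (A - 1)) = v 1"
    apply (rule vstrict) using K n1 unfolding in_pow_def by (auto simp: v1)
  then have A0: "A \<noteq> 0" "v A = 0" using v1 by auto
  have BC: "in_pow v (int n) (B * C)" using inpow_mult[of 0 B "int n" C] K by simp
  have det0: "A*D - B*C \<noteq> 0" "v (A*D - B*C) = 0" using K by (auto simp: is_unit_v_def)
  have "(A*D - B*C) + B*C \<noteq> 0 \<and> v ((A*D - B*C) + B*C) = v (A*D - B*C)"
    apply (rule vstrict) using det0 BC n1 unfolding in_pow_def by auto
  then have AD: "A*D \<noteq> 0" "v (A*D) = 0" using det0 by auto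
  then have D0: "D \<noteq> 0" "v D = 0" using vmult[of A D] A0 by auto
  have yC: "in_pow v (int n - int l) (y*C)"
    using inpow_mult[of "- int l" y "int n" C] K vy unfolding in_pow_def by auto
  have alpha0: "A + y*C \<noteq> 0" using R0 Rd by auto
  have vR: "v R = v c0 + v (A + y*C)" using Rd vneg vmult c0 alpha0 by simp
  have alpha_int: "v (A + y*C) \<ge> 0"
  proof -
    have "in_pow v 0 (A + y*C)" apply (rule inpow_add) using K apply simp
      using inpow_mono[OF yC] ln by simp
    then show ?thesis using alpha0 unfolding in_pow_def by simp
  qed
  have alpha_unit: "v (A + y*C) = 0" if "l < n"
  proof -
    have "A + y*C \<noteq> 0 \<and> v (A + y*C) = v A"
      apply (rule vstrict) using A0 yC that unfolding in_pow_def by auto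
    then show ?thesis using A0 by simp
  qed
  show ?thesis
  proof (intro conjI impI)
    assume l0: "l = 0"
    have "in_pow v 0 (B + y*D)" apply (rule inpow_add) using K apply simp
      using inpow_mult[of 0 y 0 D] K vy l0 unfolding in_pow_def by auto
    moreover have "v (A + y*C) = 0" using alpha_unit l0 n1 by simp
    ultimately show "S = 0 \<or> v S \<ge> v R" using Sd vR vneg vmult c0 unfolding in_pow_def
      by (cases "B + y*D = 0") auto
  next
    assume l1: "l \<ge> 1"
    have "y*D + B \<noteq> 0 \<and> v (y*D + B) = v (y*D)"
      apply (rule vstrict) using y0 D0 K vmult[of y D] vy l1 unfolding in_pow_def by auto
    moreover have "v (y*D) = - int l" using vmult[of y D] y0 D0 vy by simp
    ultimately have beta: "B + y*D \<noteq> 0" "v (B + y*D) = - int l" by (auto simp: add.commute)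
    have vS: "v S = v c0 - int l" using Sd beta vneg vmult c0 by simp
    show "S \<noteq> 0" using Sd beta c0 by simp
    show "v R - v S \<ge> int l" using vR vS alpha_int by simp
    show "l < n \<Longrightarrow> v R - v S = int l" using vR vS alpha_unit by simp
  qed
qed

lemma K1_intro: "in_pow v 0 B \<Longrightarrow> is_unit_v v D \<Longrightarrow> mat2 1 B 0 D \<in> K1 v n"
  unfolding K1_def Kmax_def in_pow_def is_unit_v_def by (auto simp: mat2_eq_iff v1)

lemma vsign: "s \<in> {1, -1} \<Longrightarrow> x \<noteq> 0 \<Longrightarrow> v (s * x) = v x"
  using vneg by auto

lemma lvl_h:
  assumes nodd: "odd n" and d0: "d \<noteq> 0" "v d = 0" and e: "is_unit_v v e" and c1: "in_pow v 1 c"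
    and sg: "s \<in> {1, -1}" and m: "m = (n + 1) div 2"
    and hd: "h = mat2 P Q (s*d*\<pi>^m) (-s*c)"
    and dt: "P*(-s*c) - Q*(s*d*\<pi>^m) = \<pi>^m * e"
  shows "lvl v \<pi> n h \<le> n div 2"
proof -
  define R where "R = s*d*\<pi>^m"
  define S where "S = -s*c"
  have s0: "s \<noteq> 0" "s * s = 1" using sg by auto
  have R0: "R \<noteq> 0" using s0 d0 pi0 by (simp add: R_def)
  have vR: "v R = int m" unfolding R_def using vsign[OF sg, of "d*\<pi>^m"] vmult[of d "\<pi>^m"] d0 pi0 vpow
    by (simp add: mult.assoc)
  have S0: "S = 0 \<longleftrightarrow> c = 0" using s0 by (simp add: S_def)
  have vS: "c \<noteq> 0 \<Longrightarrow> v S = v c" unfolding S_def using vsign[of "-s" c] sg by auto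
  have vc1: "c \<noteq> 0 \<Longrightarrow> v c \<ge> 1" using c1 by (simp add: in_pow_def)
  have n1: "n \<ge> 1" using nodd by (cases n) auto
  have mn: "m \<le> n" "m \<ge> 1" "m - 1 = n div 2" using m nodd n1 by (auto elim!: oddE)
  define L where "L = (if c = 0 \<or> v c \<ge> int m then 0 else nat (int m - v c))"
  have Lle: "L \<le> n div 2" using vc1 mn by (auto simp: L_def)
  have hRS: "h = mat2 P Q R S" using hd by (simp add: R_def S_def)
  define Pr where "Pr = (\<lambda>l. l \<le> n \<and>
      (\<exists>z x t u k. z \<in> center \<and> is_unit_v v u \<and> k \<in> K1 v n \<and>
         h = z ** nmat x ** amat (\<pi> powi t) ** wmat ** nmat (\<pi> powi (- int l) * u) ** k))"
  have uniq: "l = L" if "Pr l" for l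
  proof -
    from that obtain z x t u k where ln: "l \<le> n" and z: "z \<in> center" and uu: "is_unit_v v u"
      and k: "k \<in> K1 v n" and hz: "h = z ** nmat x ** amat (\<pi> powi t) ** wmat ** nmat (\<pi> powi (- int l) * u) ** k"
      unfolding Pr_def by blast
    obtain c0 where c0: "z = mat c0" "c0 \<noteq> 0" using z unfolding center_def by blast
    obtain A B C D where kd: "k = mat2 A B C D" using k unfolding K1_def by blast
    define y where "y = \<pi> powi (- int l) * u"
    have hz2: "h = mat c0 ** nmat x ** amat (\<pi> powi t) ** wmat ** nmat y ** mat2 A B C D"
      using hz c0 kd y_def by simp
    have Rd: "R = -c0*(A+y*C)" and Sd: "S = -c0*(B+y*D)"
    proof -
      have "h$2$1 = R" "h$2$2 = S" by (simp_all add: hRS mat2_def)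
      then show "R = -c0*(A+y*C)" "S = -c0*(B+y*D)"
        using decomp_bottom[of c0 x "\<pi> powi t" y A B C D] hz2 by simp_all
    qed
    note bi = bottom_inv[OF n1 ln uu k[unfolded kd] c0(2) R0 Rd Sd y_def]
    show ?thesis
    proof (cases "l = 0")
      case True
      with bi have "S = 0 \<or> v S \<ge> v R" by simp
      then have "c = 0 \<or> v c \<ge> int m" using S0 vS vR by auto
      then show ?thesis using True by (simp add: L_def)
    next
      case False
      with bi have b: "S \<noteq> 0" "v R - v S \<ge> int l" "l < n \<Longrightarrow> v R - v S = int l" by auto
      have cne: "c \<noteq> 0" using b S0 by simp
      have lt: "\<not> v c \<ge> int m" using b(2) vS[OF cne] vR False by simp
      have "l < n" proof (rule ccontr)
        assume "\<not> l < n" then have "l = n" using ln by simp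
        then show False using b(2) vS[OF cne] vR vc1[OF cne] mn by simp
      qed
      then have "int l = int m - v c" using b(3) vS[OF cne] vR by simp
      then show ?thesis using cne lt by (simp add: L_def)
    qed
  qed
  define D0 where "D0 = e / d^2"
  have e0: "e \<noteq> 0" "v e = 0" using e by (auto simp: is_unit_v_def)
  have D0u: "is_unit_v v D0" unfolding is_unit_v_def D0_def
    using vdiv[of e "d^2"] vmult[of d d] e0 d0 by (simp add: power2_eq_square)
  have D0ne: "D0 \<noteq> 0" using D0u by (simp add: is_unit_v_def)
  have pD: "\<pi> powi (- int m) * D0 = (P*S - Q*R)/R^2"
  proof -
    have "(P*S - Q*R) = \<pi>^m * e" using dt by (simp add: R_def S_def)
    moreover have "R^2 = d^2 * (\<pi>^m)^2" unfolding R_def using s0 by (simp add: power2_eq_square algebra_simps)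
    ultimately show ?thesis unfolding D0_def using pi0 d0
      by (simp add: power_int_minus field_simps power2_eq_square)
  qed
  have ex: "Pr L"
  proof (cases "L = 0")
    case True
    then have cc: "c = 0 \<or> v c \<ge> int m" by (simp add: L_def split: if_splits)
    define B0 where "B0 = S/R - D0"
    have SR: "in_pow v 0 (S/R)"
    proof (cases "c = 0")
      case True then show ?thesis by (simp add: S_def in_pow_def)
    next
      case False
      then have "S \<noteq> 0" using S0 by simp
      then show ?thesis using vdiv[of S R] R0 vS[OF False] vR cc False by (simp add: in_pow_def)
    qed
    have B0i: "in_pow v 0 B0" unfolding B0_def using inpow_add[OF SR inpow_neg[of 0 D0]] D0u
      by (simp add: in_pow_def is_unit_v_def)
    have "h = mat (-R) ** nmat (P/R) ** amat (\<pi> powi (- int m)) ** wmat ** nmat 1 ** mat2 1 B0 0 D0"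
      unfolding hRS by (rule decomp_exists[OF R0 _ pD]) (simp add: B0_def)
    then show ?thesis unfolding Pr_def using True R0 K1_intro[OF B0i D0u]
      apply (intro conjI)
       apply simp
      apply (rule exI[of _ "mat (-R)"], rule exI[of _ "P/R"], rule exI[of _ "- int m"], rule exI[of _ 1], rule exI[of _ "mat2 1 B0 0 D0"])
      by (auto simp: center_def is_unit_v_def v1)
  next
    case False
    then have cc: "c \<noteq> 0" "v c < int m" "int L = int m - v c" by (auto simp: L_def split: if_splits)
    define y where "y = S/(R*D0)"
    define u where "u = \<pi> powi (int L) * y"
    have Sne: "S \<noteq> 0" using S0 cc by simp
    have y0: "y \<noteq> 0" using Sne R0 D0ne by (simp add: y_def)
    have vy: "v y = v c - int m" unfolding y_def using vdiv[of S "R*D0"] vmult[of R D0] R0 D0ne Sne vS[OF cc(1)] vR D0u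
      by (simp add: is_unit_v_def)
    have uu: "is_unit_v v u" unfolding is_unit_v_def u_def using vmult[of "\<pi> powi (int L)" y] y0 pi0 vpowi vy cc
      by simp
    have yu: "\<pi> powi (- int L) * u = y" unfolding u_def using pi0
      by (simp add: power_int_minus mult.assoc[symmetric])
    have "h = mat (-R) ** nmat (P/R) ** amat (\<pi> powi (- int m)) ** wmat ** nmat y ** mat2 1 0 0 D0"
      unfolding hRS by (rule decomp_exists[OF R0 _ pD]) (simp add: y_def D0ne)
    then show ?thesis unfolding Pr_def using R0 K1_intro[of 0 D0, OF _ D0u] uu yu
      apply (intro conjI)
      using Lle mn apply simp
      apply (rule exI[of _ "mat (-R)"], rule exI[of _ "P/R"], rule exI[of _ "- int m"], rule exI[of _ u], rule exI[of _ "mat2 1 0 0 D0"])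
      by (auto simp: center_def in_pow_def)
  qed
  have "lvl v \<pi> n h = L"
    unfolding lvl_def using ex uniq unfolding Pr_def by (rule the_equality)
  with Lle show ?thesis by simp
qed
end

lemma Kmax_intro: "valf v \<pi> \<Longrightarrow> in_pow v 0 a \<Longrightarrow> in_pow v 0 b \<Longrightarrow> in_pow v 0 c \<Longrightarrow> in_pow v 0 d
   \<Longrightarrow> is_unit_v v (a*d - b*c) \<Longrightarrow> mat2 a b c d \<in> Kmax v"
  unfolding Kmax_def by blast

theorem lemma2p2:
  fixes v :: "'a::field_char_0 \<Rightarrow> int" and \<pi> :: 'a and n :: nat and k g :: "'a^2^2"
  assumes "nonarch_local_field v"
    and "\<pi> \<noteq> 0" and "v \<pi> = 1"
    and "odd n"
    and "k \<in> K0p v"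
    and "g \<in> {mat 1, mat2 0 1 \<pi> 0}"
  shows "\<exists>k' g' z. k' \<in> Kmax v
           \<and> lvl v \<pi> n (k' ** amat (\<pi> ^ ((n + 1) div 2))) \<le> n div 2
           \<and> g' \<in> {mat 1, mat2 0 1 (\<pi> ^ n) 0}
           \<and> z \<in> center
           \<and> k ** g ** wmat ** amat (\<pi> ^ ((n + 1) div 2))
               = k' ** amat (\<pi> ^ ((n + 1) div 2)) ** g' ** z"
proof -
  interpret valf v \<pi> using assms(1-3) by unfold_locales
  obtain a b c d where kd: "k = mat2 a b c d" and ints: "in_pow v 0 a" "in_pow v 0 b" "in_pow v 0 c" "in_pow v 0 d"
    and eu: "is_unit_v v (a*d - b*c)" and c1: "in_pow v 1 c"
    using assms(5) unfolding K0p_def Kmax_def by (auto simp: mat2_eq_iff)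
  define e where "e = a*d - b*c"
  have e0: "e \<noteq> 0" "v e = 0" using eu by (auto simp: e_def is_unit_v_def)
  have bc: "in_pow v 1 (b*c)" using inpow_mult[OF ints(2) c1] by simp
  have "e + b*c \<noteq> 0 \<and> v (e + b*c) = v e"
    apply (rule vstrict) using e0 bc unfolding in_pow_def by auto
  then have ad: "a*d \<noteq> 0" "v (a*d) = 0" using e0 by (auto simp: e_def)
  then have d0: "d \<noteq> 0" "v d = 0" using vmult[of a d] ints unfolding in_pow_def by auto
  define m where "m = (n + 1) div 2"
  define N0 where "N0 = n div 2"
  have nN: "n = N0 + m" "m = Suc N0" using assms(4) by (auto simp: m_def N0_def elim!: oddE)
  from assms(6) show ?thesis
  proof
    assume g1: "g = mat 1"
    define k' where "k' = mat2 (-b) a (-d) c"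
    have kk: "k ** wmat = k'" by (simp add: kd k'_def wmat_def mat2_mult)
    have K': "k' \<in> Kmax v" unfolding k'_def
      apply (rule Kmax_intro[OF valf_axioms inpow_neg[OF ints(2)] ints(1) inpow_neg[OF ints(4)] ints(3)])
      using eu by (simp add: algebra_simps)
    have h: "k' ** amat (\<pi>^m) = mat2 (-b*\<pi>^m) a ((-1)*d*\<pi>^m) (-(-1)*c)"
      by (simp add: k'_def amat_def mat2_mult)
    have lv: "lvl v \<pi> n (k' ** amat (\<pi>^m)) \<le> n div 2"
      by (rule lvl_h[OF assms(4) d0 eu c1 _ m_def h]) (auto simp: algebra_simps)
    show ?thesis
      apply (rule exI[of _ k'], rule exI[of _ "mat 1"], rule exI[of _ "mat 1"])
      using K' lv kk g1 by (auto simp: m_def center_def matrix_mul_assoc)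
  next
    assume "g \<in> {mat2 0 1 \<pi> 0}"
    then have g2: "g = mat2 0 1 \<pi> 0" by simp
    define k' where "k' = mat2 b (-a) d (-c)"
    have K': "k' \<in> Kmax v" unfolding k'_def
      apply (rule Kmax_intro[OF valf_axioms ints(2) inpow_neg[OF ints(1)] ints(4) inpow_neg[OF ints(3)]])
      using eu by (simp add: algebra_simps)
    have h: "k' ** amat (\<pi>^m) = mat2 (b*\<pi>^m) (-a) (1*d*\<pi>^m) (-1*c)"
      by (simp add: k'_def amat_def mat2_mult)
    have lv: "lvl v \<pi> n (k' ** amat (\<pi>^m)) \<le> n div 2"
      by (rule lvl_h[OF assms(4) d0 eu c1 _ m_def h]) (auto simp: algebra_simps)
    have z: "mat (inverse (\<pi>^N0)) \<in> center" using assms(2) by (auto simp: center_def)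
    have eq: "k ** g ** wmat ** amat (\<pi>^m) = k' ** amat (\<pi>^m) ** mat2 0 1 (\<pi>^n) 0 ** mat (inverse (\<pi>^N0))"
      unfolding kd g2 k'_def wmat_def amat_def mat_mat2 mat2_mult mat2_eq_iff
      using assms(2) unfolding nN(1) by (simp add: nN(2) field_simps power_add)
    show ?thesis
      apply (rule exI[of _ k'], rule exI[of _ "mat2 0 1 (\<pi>^n) 0"], rule exI[of _ "mat (inverse (\<pi>^N0))"])
      using K' lv z eq by (simp add: m_def)
  qed
qed

end
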